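(* For nonnegative integers $n$ and $s$ with $s\le n$, $$\sum_{k=0}^{n}\begin{bmatrix}n+k\\2k\end{bmatrix}\begin{bmatrix}2k\\k\end{bmatrix}\begin{bmatrix}2k\\k+s\end{bmatrix}\frac{(-1)^k q^{\binom{n-k}{2}}}{(-q;q)_k^2} =\begin{cases}(-1)^s q^{\frac{n^2-s^2}{2}}\begin{bmatrix}n\\ \frac{n-s}{2}\end{bmatrix}_{q^2}^2\dfrac{(q;q)_{n-s}(q;q)_{n+s}}{(q^2;q^2)_n^2}, & \text{if } n\equiv s\pmod 2,\\[2mm] 0, & \text{otherwise.}\end{cases}$$
   Context: For an indeterminate $q$ and an integer $n\ge 0$: $(a;q)_0=1$ and $(a;q)_n=(1-a)(1-aq)\cdots(1-aq^{n-1})$. The $q$-binomial coefficient is $\begin{bmatrix}n\\k\end{bmatrix}_q=\frac{(q^{n-k+1};q)_k}{(q;q)_k}$ if $0\le k\le n$ and $0$ otherwise; if no base is indicated, the base is $q$. *)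

theory Defs
  imports "HOL-Computational_Algebra.Formal_Power_Series"
begin

definition qpoch :: "'a::comm_ring_1 \<Rightarrow> 'a \<Rightarrow> nat \<Rightarrow> 'a" where
  "qpoch a q n = (\<Prod>i<n. 1 - a * q ^ i)"

definition qbin :: "'a::{comm_ring_1,divide} \<Rightarrow> nat \<Rightarrow> nat \<Rightarrow> 'a" where
  "qbin q n k = (if k \<le> n then qpoch (q ^ (n - k + 1)) q k div qpoch q q k else 0)"

end

theory Submission
  imports Defs "HOL-Computational_Algebra.Formal_Laurent_Series"
begin

lemma qpoch_Suc: "qpoch a q (Suc k) = qpoch a q k * (1 - a * q ^ k)"
  by (simp add: qpoch_def)

lemma qpoch_0[simp]: "qpoch a q 0 = 1"
  by (simp add: qpoch_def)

definition tm :: "'a::field \<Rightarrow> nat \<Rightarrow> nat \<Rightarrow> nat \<Rightarrow> 'a" where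
  "tm q n s k = qbin q (n + k) (2 * k) * qbin q (2 * k) k * qbin q (2 * k) (k + s)
            * ((-1) ^ k * q ^ ((n - k) choose 2)) / (qpoch (- q) q k) ^ 2"

lemma tm_lt: "k < s \<Longrightarrow> tm q n s k = 0"
  by (simp add: tm_def qbin_def)

lemma tm_gt: "n < k \<Longrightarrow> tm q n s k = 0"
  by (simp add: tm_def qbin_def)

lemma alg_E2:
  fixes a b c d e g X1 X2 Y Z W V P M :: "'a::field"
  assumes "c\<noteq>0" "d\<noteq>0" "e\<noteq>0" "g\<noteq>0" "Y\<noteq>0" "Z\<noteq>0" "W\<noteq>0" "V \<noteq> 0"
  shows "(-1)^(Suc k) * P * (a*X1) * (b*X2*Y) / (c * (d*Y)^2 * (e*Z) * (g*W)) * M * Y * Z * W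
     = - ((-1)^k * (P*M) * a * b / ((c*V) * d^2 * e * g)) * X1 * X2 * V"
  using assms by (simp add: field_simps power2_eq_square)

lemma alg_E1:
  fixes a b c d e g X Z W V P M :: "'a::field"
  assumes "c\<noteq>0" "d\<noteq>0" "e\<noteq>0" "g\<noteq>0" "Z\<noteq>0" "W\<noteq>0" "V \<noteq> 0"
  shows "(-1)^k * P * a * b / (c * d^2 * (e*Z) * g) * M * X * Z
     = (-1)^k * (P*M) * (a*X) * b / ((c*V) * d^2 * e * (g*W)) * V * W"
  using assms by (simp add: field_simps power2_eq_square)
lemma alg_T:
  fixes q S J M E E1 E2 Y W X1 A B :: "'a::field"
  assumes hA: "A = 1 - q*S^2*J^2*M" and hB: "B = 1 - q*S^2*J"
    and hE2: "E2 * M * Y * B * W = - E * X1 * (1 - q*S^2*J^2) * (1 - q*M)"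
    and hE1: "E1 * M * A * B = E * (1 - q*M) * (1 - J)"
    and nz: "Y \<noteq> 0" "W \<noteq> 0" "X1 \<noteq> 0" "M \<noteq> 0" "A \<noteq> 0" "B \<noteq> 0"
  shows "(1 - q*J*M) * E + (q*S*S*J*M) * (1 - J*M) * E1
       = (- M * Y * W / X1 * E2) - (- (q*M) * (1 - S^2*J^2) * (1 - J) / A * E)"
proof -
  have e2: "E2 = - E * X1 * (1 - q*S^2*J^2) * (1 - q*M) / (M * Y * B * W)"
  proof -
    have D: "M * Y * B * W \<noteq> 0" using nz by simp
    show ?thesis using D hE2 by (subst eq_divide_eq) (simp add: ac_simps)
  qed
  have e1: "E1 = E * (1 - q*M) * (1 - J) / (M * A * B)"
  proof -
    have D: "M * A * B \<noteq> 0" using nz by simp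
    show ?thesis using D hE1 by (subst eq_divide_eq) (simp add: ac_simps)
  qed
  have key: "(1 - q*J*M) * A * B + (q*S*S*J) * (1 - J*M) * (1 - q*M) * (1 - J)
       = (1 - q*S^2*J^2) * (1 - q*M) * A + (q*M) * (1 - S^2*J^2) * (1 - J) * B"
    unfolding hA hB by algebra
  have L: "(1 - q*J*M) * E + (q*S*S*J*M) * (1 - J*M) * E1
     = E * ((1 - q*J*M) * A * B + (q*S*S*J) * (1 - J*M) * (1 - q*M) * (1 - J)) / (A * B)"
    unfolding e1 using nz by (simp add: field_simps)
  have R: "(- M * Y * W / X1 * E2) - (- (q*M) * (1 - S^2*J^2) * (1 - J) / A * E)
     = E * ((1 - q*S^2*J^2) * (1 - q*M) * A + (q*M) * (1 - S^2*J^2) * (1 - J) * B) / (A * B)"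
    unfolding e2 using nz by (simp add: field_simps)
  show ?thesis unfolding L R key ..
qed

definition Ssum :: "'a::field \<Rightarrow> nat \<Rightarrow> nat \<Rightarrow> 'a" where
  "Ssum q n s = (\<Sum>k = 0..n. tm q n s k)"

definition Gt :: "'a::field \<Rightarrow> nat \<Rightarrow> nat \<Rightarrow> nat \<Rightarrow> 'a" where
  "Gt q n s k = (- (q^(n-k))) * (1-q^(2*k)) * (1-q^(k-s)) / (1-q^(n+k)) * tm q n s k"

context
  fixes q :: "'a::field"
  assumes qn: "\<And>i. 0 < i \<Longrightarrow> q ^ i \<noteq> 1" and q0: "q \<noteq> 0"
begin

lemma one_minus_nz: "0 < i \<Longrightarrow> 1 - q ^ i \<noteq> 0"
  using qn by auto

lemma qf_nz: "qpoch q q m \<noteq> 0"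
  unfolding qpoch_def using one_minus_nz[of "Suc i" for i]
  by (auto simp: power_Suc)

lemma Q_nz: "qpoch (q^2) (q^2) m \<noteq> 0"
proof -
  have "\<And>i. 1 - q^2 * (q^2)^i \<noteq> 0"
  proof -
    fix i
    have "q^2 * (q^2)^i = q^(2 * Suc i)" by (simp only: power_mult power_Suc)
    thus "1 - q^2 * (q^2)^i \<noteq> 0" using one_minus_nz[of "2 * Suc i"] by simp
  qed
  thus ?thesis unfolding qpoch_def by auto
qed

lemma qpoch_shift: "qpoch (q ^ (m + 1)) q k * qpoch q q m = qpoch q q (m + k)"
proof (induction k)
  case 0 then show ?case by simp
next
  case (Suc k)
  have "qpoch (q ^ (m + 1)) q (Suc k) * qpoch q q m
      = (qpoch (q ^ (m + 1)) q k * qpoch q q m) * (1 - q ^ (m + 1) * q ^ k)"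
    by (simp add: qpoch_Suc algebra_simps)
  also have "\<dots> = qpoch q q (m + Suc k)"
    using Suc by (simp add: qpoch_Suc power_add)
  finally show ?case .
qed

lemma qbin_closed: "k \<le> N \<Longrightarrow> qbin q N k = qpoch q q N / (qpoch q q k * qpoch q q (N - k))"
proof -
  assume k: "k \<le> N"
  have "qpoch (q ^ (N - k + 1)) q k = qpoch q q N / qpoch q q (N - k)"
    using qpoch_shift[of "N - k" k] k qf_nz[of "N-k"] by (simp add: field_simps)
  thus ?thesis using k by (simp add: qbin_def)
qed

lemma negq: "qpoch (- q) q k * qpoch q q k = qpoch (q^2) (q^2) k"
proof (induction k)
  case 0 then show ?case by simp
next
  case (Suc k)
  then show ?case by (simp add: qpoch_Suc algebra_simps power2_eq_square power_mult_distrib)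
qed

lemma qf_Suc: "qpoch q q (Suc x) = qpoch q q x * (1 - q ^ Suc x)"
  by (simp add: qpoch_Suc)

lemma Q_Suc: "qpoch (q^2) (q^2) (Suc x) = qpoch (q^2) (q^2) x * (1 - q ^ (2 * x + 2))"
  by (simp add: qpoch_Suc power_mult[symmetric] power_add[symmetric])

lemma tm_closed:
  assumes "s \<le> k" "k \<le> n"
  shows "tm q n s k = (-1)^k * q^((n-k) choose 2) * qpoch q q (n+k) * qpoch q q (2*k)
     / (qpoch q q (n-k) * (qpoch (q^2) (q^2) k)^2 * qpoch q q (k+s) * qpoch q q (k-s))"
proof -
  have e1: "qbin q (n + k) (2 * k) = qpoch q q (n+k) / (qpoch q q (2*k) * qpoch q q (n-k))"
    using qbin_closed[of "2*k" "n+k"] assms by simp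
  have e2: "qbin q (2 * k) k = qpoch q q (2*k) / (qpoch q q k * qpoch q q k)"
    using qbin_closed[of k "2*k"] by simp
  have e3: "qbin q (2 * k) (k+s) = qpoch q q (2*k) / (qpoch q q (k+s) * qpoch q q (k-s))"
    using qbin_closed[of "k+s" "2*k"] assms by simp
  have e4: "qpoch (- q) q k = qpoch (q^2) (q^2) k / qpoch q q k"
    using negq[of k] qf_nz[of k] by (simp add: field_simps)
  show ?thesis unfolding tm_def e1 e2 e3 e4
    using qf_nz Q_nz by (simp add: field_simps power2_eq_square)
qed

lemma tm_closed':
  assumes "s \<le> k" "k \<le> n" "a = n+k" "b = 2*k" "c = n-k" "d = k+s" "e = k-s" "p = (n-k) choose 2"
  shows "tm q n s k = (-1)^k * q^p * qpoch q q a * qpoch q q b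
     / (qpoch q q c * (qpoch (q^2) (q^2) k)^2 * qpoch q q d * qpoch q q e)"
  using tm_closed[OF assms(1,2)] assms(3-) by simp

lemma choose2_Suc: "(Suc m) choose 2 = (m choose 2) + m"
  by (metis Suc_1 add.commute binomial_Suc_Suc choose_one)

lemma tm_E2:
  assumes "s \<le> k" "k < n"
  shows "tm q n s (Suc k) * q^(n-k-1) * (1-q^(2*k+2)) * (1-q^(k+s+1)) * (1-q^(k+1-s))
       = - tm q n s k * (1-q^(n+k+1)) * (1-q^(2*k+1)) * (1-q^(n-k))"
proof -
  obtain m where m: "n = k + 1 + m" using assms by (intro that[of "n - k - 1"]) simp
  obtain j where j: "k = s + j" using assms by (intro that[of "k - s"]) simp
  have c1: "tm q n s (Suc k) = (-1)^(Suc k) * q^(m choose 2) * qpoch q q (n+k+1) * qpoch q q (2*k+2)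
     / (qpoch q q m * (qpoch (q^2) (q^2) (Suc k))^2 * qpoch q q (k+s+1) * qpoch q q (j+1))"
    by (rule tm_closed') (use assms m j in auto)
  have c0: "tm q n s k = (-1)^k * q^((Suc m) choose 2) * qpoch q q (n+k) * qpoch q q (2*k)
     / (qpoch q q (Suc m) * (qpoch (q^2) (q^2) k)^2 * qpoch q q (k+s) * qpoch q q j)"
    by (rule tm_closed') (use assms m j in auto)
  have r1: "qpoch q q (n+k+1) = qpoch q q (n+k) * (1 - q^(n+k+1))"
    using qf_Suc[of "n+k"] by simp
  have r2: "qpoch q q (2*k+2) = qpoch q q (2*k) * (1 - q^(2*k+1)) * (1 - q^(2*k+2))"
    using qf_Suc[of "2*k"] qf_Suc[of "Suc (2*k)"] by simp
  have r3: "qpoch q q (Suc m) = qpoch q q m * (1 - q^(n-k))"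
    using qf_Suc[of m] m by simp
  have r4: "qpoch q q (k+s+1) = qpoch q q (k+s) * (1 - q^(k+s+1))"
    using qf_Suc[of "k+s"] by simp
  have r5: "qpoch q q (j+1) = qpoch q q j * (1 - q^(k+1-s))"
    using qf_Suc[of j] j by simp
  have nk: "n - k - 1 = m" using m by simp
  have nz: "1 - q^(n-k) \<noteq> 0" "1 - q^(2*k+2) \<noteq> 0" "1 - q^(k+s+1) \<noteq> 0" "1 - q^(k+1-s) \<noteq> 0"
    by (intro one_minus_nz; use assms in simp)+
  show ?thesis
    unfolding c1 c0 r1 r2 r3 r4 r5 Q_Suc choose2_Suc nk power_add[of q "m choose 2" m]
    by (rule alg_E2) (use qf_nz Q_nz nz in auto)
qed

lemma tm_E1:
  assumes "s \<le> k" "k < n"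
  shows "tm q (n-1) (s+1) k * q^(n-k-1) * (1-q^(n+k)) * (1-q^(k+s+1))
       = tm q n s k * (1-q^(n-k)) * (1-q^(k-s))"
proof (cases "k = s")
  case True
  then show ?thesis by (simp add: tm_lt)
next
  case False
  obtain m where m: "n = k + 1 + m" using assms by (intro that[of "n - k - 1"]) simp
  obtain j where j: "k = s + 1 + j" using assms False by (intro that[of "k - s - 1"]) simp
  have c1: "tm q (n-1) (s+1) k = (-1)^k * q^(m choose 2) * qpoch q q (n-1+k) * qpoch q q (2*k)
     / (qpoch q q m * (qpoch (q^2) (q^2) k)^2 * qpoch q q (k+s+1) * qpoch q q j)"
    by (rule tm_closed') (use assms m j in auto)
  have c0: "tm q n s k = (-1)^k * q^((Suc m) choose 2) * qpoch q q (n+k) * qpoch q q (2*k)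
     / (qpoch q q (Suc m) * (qpoch (q^2) (q^2) k)^2 * qpoch q q (k+s) * qpoch q q (Suc j))"
    by (rule tm_closed') (use assms m j in auto)
  have r1: "qpoch q q (n+k) = qpoch q q (n-1+k) * (1 - q^(n+k))"
    using qf_Suc[of "n-1+k"] m by simp
  have r3: "qpoch q q (Suc m) = qpoch q q m * (1 - q^(n-k))"
    using qf_Suc[of m] m by simp
  have r4: "qpoch q q (k+s+1) = qpoch q q (k+s) * (1 - q^(k+s+1))"
    using qf_Suc[of "k+s"] by simp
  have r5: "qpoch q q (Suc j) = qpoch q q j * (1 - q^(k-s))"
    using qf_Suc[of j] j by simp
  have nk: "n - k - 1 = m" using m by simp
  have nz: "1 - q^(n-k) \<noteq> 0" "1 - q^(k+s+1) \<noteq> 0" "1 - q^(k-s) \<noteq> 0"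
    by (intro one_minus_nz; use assms False in simp)+
  show ?thesis
    unfolding c1 c0 r1 r3 r4 r5 choose2_Suc nk power_add[of q "m choose 2" m]
    by (rule alg_E1) (use qf_nz Q_nz nz in auto)
qed

lemma tele_gen:
  assumes "s \<le> k" "k < n"
  shows "(1-q^(n-s)) * tm q n s k + q^(n+s) * (1-q^(n-s-1)) * tm q (n-1) (s+1) k
       = Gt q n s (Suc k) - Gt q n s k"
proof -
  obtain m where m: "n = k + 1 + m" using assms by (intro that[of "n - k - 1"]) simp
  obtain j where j: "k = s + j" using assms by (intro that[of "k - s"]) simp
  define S where "S = q^s"
  define J where "J = q^j"
  define M where "M = q^m"
  have p1: "q^(n-s) = q*J*M" "q^(n+s) = q*S*S*J*M" "q^(n-s-1) = J*M" "q^(n - Suc k) = M"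
    "q^(n-k) = q*M" "q^(2*k) = S^2*J^2" "q^(k-s) = J" "q^(n-k-1) = M"
    "q^(2*k+1) = q*S^2*J^2" "q^(n+k) = q*S^2*J^2*M" "q^(k+s+1) = q*S^2*J"
    unfolding S_def J_def M_def m j
    by (simp_all add: power_add power2_eq_square algebra_simps power_mult)
  have p2: "q^(2*k+2) = q^(2 * Suc k)" "q^(k+1-s) = q^(Suc k - s)" "q^(n+k+1) = q^(n + Suc k)"
    by simp_all
  have hE2: "tm q n s (Suc k) * M * (1 - q^(2 * Suc k)) * (1 - q*S^2*J) * (1 - q^(Suc k - s))
      = - tm q n s k * (1 - q^(n + Suc k)) * (1 - q*S^2*J^2) * (1 - q*M)"
    using tm_E2[OF assms] unfolding p1 p2 .
  have hE1: "tm q (n-1) (s+1) k * M * (1 - q*S^2*J^2*M) * (1 - q*S^2*J) = tm q n s k * (1 - q*M) * (1 - J)"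
    using tm_E1[OF assms] unfolding p1 .
  have M0: "M \<noteq> 0" unfolding M_def using q0 by simp
  have nz: "1 - q^(2 * Suc k) \<noteq> 0" "1 - q^(Suc k - s) \<noteq> 0" "1 - q^(n + Suc k) \<noteq> 0"
      "1 - q^(n+k) \<noteq> 0" "1 - q^(k+s+1) \<noteq> 0"
    by (intro one_minus_nz; use assms in simp)+
  have nz2: "1 - q*S^2*J^2*M \<noteq> 0" "1 - q*S^2*J \<noteq> 0"
    using nz(4,5) unfolding p1 .
  show ?thesis
    unfolding Gt_def p1
    by (rule alg_T[OF refl refl hE2 hE1 nz(1) nz(2) nz(3) M0 nz2(1) nz2(2)])
qed

lemma tele:
  assumes "s < n" "k \<le> n"
  shows "(1-q^(n-s)) * tm q n s k + q^(n+s) * (1-q^(n-s-1)) * tm q (n-1) (s+1) k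
       = Gt q n s (Suc k) - Gt q n s k"
proof (cases "k < s")
  case True
  have "Suc k - s = 0" using True by simp
  then show ?thesis using True by (simp add: Gt_def tm_lt)
next
  case False
  show ?thesis
  proof (cases "k = n")
    case True
    have nz: "1 - q^(n+n) \<noteq> 0" by (intro one_minus_nz; use assms in simp)
    have "tm q (n-1) (s+1) k = 0" "Gt q n s (Suc k) = 0" using True assms by (simp_all add: tm_gt Gt_def)
    moreover have "Gt q n s k = - (1-q^(n-s)) * tm q n s k"
      unfolding Gt_def True using nz by (simp add: field_simps mult_2_right)
    ultimately show ?thesis by (simp add: algebra_simps)
  next
    case False
    then show ?thesis using tele_gen[of s k n] assms \<open>\<not> k < s\<close> by simp
  qed
qed


lemma Ssum_rec:
  assumes "s < n"
  shows "(1-q^(n-s)) * Ssum q n s + q^(n+s) * (1-q^(n-s-1)) * Ssum q (n-1) (s+1) = 0"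
proof -
  have "(\<Sum>k = 0..n. (1-q^(n-s)) * tm q n s k + q^(n+s) * (1-q^(n-s-1)) * tm q (n-1) (s+1) k)
      = (\<Sum>k = 0..n. Gt q n s (Suc k) - Gt q n s k)"
    by (rule sum.cong) (use tele assms in auto)
  also have "\<dots> = Gt q n s (Suc n) - Gt q n s 0" by (rule sum_Suc_diff) simp
  also have "\<dots> = 0" by (simp add: Gt_def tm_gt)
  finally have A: "(\<Sum>k = 0..n. (1-q^(n-s)) * tm q n s k + q^(n+s) * (1-q^(n-s-1)) * tm q (n-1) (s+1) k) = 0" .
  have B: "(\<Sum>k = 0..n. tm q (n-1) (s+1) k) = Ssum q (n-1) (s+1)"
  proof -
    have "n = Suc (n-1)" using assms by simp
    then have "(\<Sum>k = 0..n. tm q (n-1) (s+1) k) = (\<Sum>k = 0..Suc (n-1). tm q (n-1) (s+1) k)" by simp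
    also have "\<dots> = Ssum q (n-1) (s+1)" unfolding Ssum_def sum.atLeast0_atMost_Suc by (simp add: tm_gt)
    finally show ?thesis .
  qed
  show ?thesis using A B unfolding Ssum_def sum.distrib sum_distrib_left[symmetric] by simp
qed

end

definition Rr :: "'a::field \<Rightarrow> nat \<Rightarrow> nat \<Rightarrow> 'a" where
  "Rr q n s = (if even (n - s)
          then (-1) ^ s * q ^ ((n ^ 2 - s ^ 2) div 2) * (qbin (q ^ 2) n ((n - s) div 2)) ^ 2
               * (qpoch q q (n - s) * qpoch q q (n + s)) / (qpoch (q ^ 2) (q ^ 2) n) ^ 2
          else 0)"

lemma alg_R:
  fixes a b c d e P R X Y Z :: "'a::field"
  assumes "a \<noteq> 0" "b \<noteq> 0" "c \<noteq> 0" "X \<noteq> 0" "Y \<noteq> 0"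
  shows "Y * ((-1)^s * (P * R) * (a * X / (b * Y * c))^2 * (d * Z * Y * e) / (a * X)^2)
    + R * Z * ((-1)^(s+1) * P * (a / (b * c))^2 * (d * e) / a^2) = 0"
  using assms by (simp add: field_simps power2_eq_square)

lemma qn2: "(\<And>i. 0 < i \<Longrightarrow> (q::'a::field) ^ i \<noteq> 1) \<Longrightarrow> 0 < i \<Longrightarrow> (q^2) ^ i \<noteq> 1"
  by (simp add: power_mult[symmetric])

lemma Rr_rec:
  fixes q :: "'a::field"
  assumes qn: "\<And>i. 0 < i \<Longrightarrow> q ^ i \<noteq> 1" and q0: "q \<noteq> 0" and sn: "s + 2 \<le> n"
  shows "(1-q^(n-s)) * Rr q n s + q^(n+s) * (1-q^(n-s-1)) * Rr q (n-1) (s+1) = 0"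
proof (cases "even (n - s)")
  case False
  then have "odd (n - 1 - (s + 1))" using sn by presburger
  then show ?thesis using False by (simp add: Rr_def)
next
  case True
  then obtain t where t: "n - s = 2 * t + 2"
  proof -
    from True obtain u where u: "n - s = 2 * u" by (rule evenE)
    show ?thesis using u sn by (intro that[of "u - 1"]) auto
  qed
  have e1: "(n - s) div 2 = Suc t" "n - 1 - (s + 1) = 2 * t" "(2 * t) div 2 = t" using t sn by auto
  have ev2: "even (n - 1 - (s+1))" using e1 by simp
  have sq: "n^2 = s^2 + 4 * (t+1) * (s+t+1)" "(n-1)^2 = (s+1)^2 + 4 * t * (s+t+1)"
  proof -
    have nn: "n = s + 2 * t + 2" using t sn by simp
    show "n^2 = s^2 + 4 * (t+1) * (s+t+1)" unfolding nn by (simp add: power2_eq_square algebra_simps)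
    show "(n-1)^2 = (s+1)^2 + 4 * t * (s+t+1)" unfolding nn by (simp add: power2_eq_square algebra_simps)
  qed
  have d1: "n^2 - s^2 = 2 * (2 * (t+1) * (s+t+1))" using sq by (simp add: algebra_simps)
  have d2: "(n-1)^2 - (s+1)^2 = 2 * (2 * t * (s+t+1))" using sq by (simp add: algebra_simps)
  have ex: "(n^2 - s^2) div 2 = ((n-1)^2 - (s+1)^2) div 2 + (n + s)"
    unfolding d1 d2 using t sn by simp
  have qn2': "\<And>i. 0 < i \<Longrightarrow> (q^2) ^ i \<noteq> 1" by (rule qn2[OF qn])
  have q2: "q^2 \<noteq> 0" using q0 by simp
  have b1: "qbin (q^2) n (Suc t) = qpoch (q^2) (q^2) n / (qpoch (q^2) (q^2) (Suc t) * qpoch (q^2) (q^2) (n - 1 - t))"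
    using qbin_closed[OF qn2' q2, of "Suc t" n] t sn by simp
  have b2: "qbin (q^2) (n-1) t = qpoch (q^2) (q^2) (n-1) / (qpoch (q^2) (q^2) t * qpoch (q^2) (q^2) (n - 1 - t))"
    using qbin_closed[OF qn2' q2, of t "n-1"] t sn by simp
  have Qn: "qpoch (q^2) (q^2) n = qpoch (q^2) (q^2) (n-1) * (1 - q^(2*(n-1)+2))"
    using Q_Suc[OF qn q0, of "n-1"] sn by simp
  have Qt: "qpoch (q^2) (q^2) (Suc t) = qpoch (q^2) (q^2) t * (1 - q^(2*t+2))"
    by (rule Q_Suc[OF qn q0])
  have f1: "qpoch q q (n - s) = qpoch q q (2*t) * (1 - q^(2*t+1)) * (1 - q^(2*t+2))"
    unfolding t using qf_Suc[OF qn q0, of "2*t"] qf_Suc[OF qn q0, of "Suc (2*t)"] by simp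
  have f2: "qpoch q q (n - 1 - (s + 1)) = qpoch q q (2*t)" using e1 by simp
  have f3: "n - 1 + (s + 1) = n + s" using sn by simp
  have nsm: "n - s - 1 = 2*t+1" using t by simp
  have nz: "qpoch (q^2) (q^2) (n-1) \<noteq> 0" "qpoch (q^2) (q^2) t \<noteq> 0" "qpoch (q^2) (q^2) (n - 1 - t) \<noteq> 0"
     "1 - q^(2*(n-1)+2) \<noteq> 0" "1 - q^(2*t+2) \<noteq> 0"
    by (rule Q_nz[OF qn q0] one_minus_nz[OF qn q0]; simp)+
  have R1: "Rr q n s = (-1)^s * (q^(((n-1)^2 - (s+1)^2) div 2) * q^(n+s))
      * (qpoch (q^2) (q^2) (n-1) * (1 - q^(2*(n-1)+2)) / (qpoch (q^2) (q^2) t * (1 - q^(2*t+2)) * qpoch (q^2) (q^2) (n - 1 - t)))^2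
      * (qpoch q q (2*t) * (1 - q^(2*t+1)) * (1 - q^(2*t+2)) * qpoch q q (n + s))
      / (qpoch (q^2) (q^2) (n-1) * (1 - q^(2*(n-1)+2)))^2"
    unfolding Rr_def if_P[OF True] e1(1) b1 Qn Qt f1 ex power_add[of q "((n-1)^2 - (s+1)^2) div 2" "n+s"]
    by (simp only: mult.assoc)
  have R2: "Rr q (n-1) (s+1) = (-1)^(s+1) * q^(((n-1)^2 - (s+1)^2) div 2)
      * (qpoch (q^2) (q^2) (n-1) / (qpoch (q^2) (q^2) t * qpoch (q^2) (q^2) (n - 1 - t)))^2
      * (qpoch q q (2*t) * qpoch q q (n + s)) / (qpoch (q^2) (q^2) (n-1))^2"
    unfolding Rr_def e1(2) e1(3) b2 f2 f3 by simp
  show ?thesis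
    unfolding nsm
    unfolding t R1 R2
    by (rule alg_R) (use nz in auto)
qed


lemma main_gen:
  fixes q :: "'a::field"
  assumes qn: "\<And>i. 0 < i \<Longrightarrow> q ^ i \<noteq> 1" and q0: "q \<noteq> 0"
  shows "s \<le> n \<Longrightarrow> Ssum q n s = Rr q n s"
proof (induction "n - s" arbitrary: n s rule: less_induct)
  case less
  consider "n = s" | "n = s + 1" | "s + 2 \<le> n" using less.prems by linarith
  then show ?case
  proof cases
    case 1
    have S: "Ssum q n n = tm q n n n"
    proof (cases n)
      case 0 then show ?thesis by (simp add: Ssum_def)
    next
      case (Suc m)
      have "(\<Sum>k = 0..m. tm q n n k) = 0" by (rule sum.neutral) (use Suc in \<open>auto simp: tm_lt\<close>)
      then show ?thesis unfolding Ssum_def Suc sum.atLeast0_atMost_Suc by (simp add: Suc)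
    qed
    have T: "tm q n n n = (-1)^n * qpoch q q (n+n) / (qpoch (q^2) (q^2) n)^2"
      using tm_closed[OF qn q0 order.refl order.refl, of n] qf_nz[OF qn q0, of "n+n"]
      by (simp add: mult_2 binomial_eq_0)
    have R: "Rr q n n = (-1)^n * qpoch q q (n+n) / (qpoch (q^2) (q^2) n)^2"
      by (simp add: Rr_def qbin_def)
    show ?thesis using S T R 1 by simp
  next
    case 2
    have c2: "n = s + 1" by fact
    have "(1-q^(n-s)) * Ssum q n s + q^(n+s) * (1-q^(n-s-1)) * Ssum q (n-1) (s+1) = 0"
      using Ssum_rec[OF qn q0, of s n] c2 by simp
    then have "(1 - q) * Ssum q n s = 0" using c2 by simp
    moreover have "1 - q \<noteq> 0" using one_minus_nz[OF qn q0, of 1] by simp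
    ultimately have "Ssum q n s = 0" by simp
    moreover have "Rr q n s = 0" using c2 by (simp add: Rr_def)
    ultimately show ?thesis by simp
  next
    case 3
    have c3: "s + 2 \<le> n" by fact
    have IH: "Ssum q (n-1) (s+1) = Rr q (n-1) (s+1)"
      by (rule less.hyps) (use c3 in auto)
    have a: "(1-q^(n-s)) * Ssum q n s + q^(n+s) * (1-q^(n-s-1)) * Ssum q (n-1) (s+1) = 0"
      using Ssum_rec[OF qn q0, of s n] c3 by simp
    have b: "(1-q^(n-s)) * Rr q n s + q^(n+s) * (1-q^(n-s-1)) * Rr q (n-1) (s+1) = 0"
      by (rule Rr_rec[OF qn q0 c3])
    have nz: "1 - q^(n-s) \<noteq> 0" using one_minus_nz[OF qn q0, of "n-s"] c3 by simp
    have a': "(1-q^(n-s)) * Ssum q n s = - (q^(n+s) * (1-q^(n-s-1)) * Rr q (n-1) (s+1))"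
      using a unfolding IH by (simp only: eq_neg_iff_add_eq_0)
    have b': "(1-q^(n-s)) * Rr q n s = - (q^(n+s) * (1-q^(n-s-1)) * Rr q (n-1) (s+1))"
      using b by (simp only: eq_neg_iff_add_eq_0)
    have "(1-q^(n-s)) * Ssum q n s = (1-q^(n-s)) * Rr q n s" using a' b' by simp
    then show ?thesis using nz by simp
  qed
qed



lemma phi_qpoch: "fps_to_fls (qpoch a b k) = qpoch (fps_to_fls a) (fps_to_fls b) k"
  by (induction k) (simp_all add: qpoch_Suc fls_times_fps_to_fls fps_to_fls_power)

lemma qpoch_nth0: "(a::'a::field fps) $ 0 = 0 \<Longrightarrow> (qpoch a b k) $ 0 = 1"
  by (induction k) (simp_all add: qpoch_Suc)

lemma phi_div: "(y::'a::field fps) $ 0 \<noteq> 0 \<Longrightarrow> fps_to_fls (x / y) = fps_to_fls x / fps_to_fls y"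
  using fls_divide_fps_to_fls[of y x] by (simp add: subdegree_eq_0_iff)

lemma phi_qbin: "(b::'a::field fps) $ 0 = 0 \<Longrightarrow> fps_to_fls (qbin b N k) = qbin (fps_to_fls b) N k"
  unfolding qbin_def by (simp add: phi_div qpoch_nth0 phi_qpoch fps_to_fls_power fls_times_fps_to_fls)

lemma phi_sum: "fps_to_fls (\<Sum>k = 0..(n::nat). (f k :: 'a::field fps)) = (\<Sum>k = 0..n. fps_to_fls (f k))"
  by (induction n) simp_all

lemma X_prop: "0 < i \<Longrightarrow> (fls_X :: 'a::field fls) ^ i \<noteq> 1"
proof
  assume "0 < i" "(fls_X :: 'a fls) ^ i = 1"
  then have "fps_to_fls ((fps_X :: 'a fps) ^ i) = 1" by (simp add: fps_to_fls_power)
  then have "(fps_X :: 'a fps) ^ i = 1" by simp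
  then have "((fps_X :: 'a fps) ^ i) $ 0 = (1 :: 'a fps) $ 0" by (rule arg_cong)
  moreover have "((fps_X :: 'a fps) ^ i) $ 0 = (if 0 = i then 1 else 0)" by (rule fps_X_power_nth)
  ultimately show False using \<open>0 < i\<close> by (simp del: fps_X_power_nth)
qed

lemma phi_simps_aux:
  "fps_to_fls (fps_X :: 'a::field fps) = fls_X"
  "(fps_X :: 'a::field fps) $ 0 = 0"
  "((fps_X :: 'a::field fps)^2) $ 0 = 0"
  "(- (fps_X :: 'a::field fps)) $ 0 = 0"
  by (simp_all add: power2_eq_square)

theorem lemma3p2:
  fixes n s :: nat
  assumes "s \<le> n"
  defines "q \<equiv> (fps_X :: 'a::field_char_0 fps)"
  shows "(\<Sum>k = 0..n. qbin q (n + k) (2 * k) * qbin q (2 * k) k * qbin q (2 * k) (k + s)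
            * ((-1) ^ k * q ^ ((n - k) choose 2)) / (qpoch (- q) q k) ^ 2)
       = (if even (n - s)
          then (-1) ^ s * q ^ ((n ^ 2 - s ^ 2) div 2) * (qbin (q ^ 2) n ((n - s) div 2)) ^ 2
               * (qpoch q q (n - s) * qpoch q q (n + s)) / (qpoch (q ^ 2) (q ^ 2) n) ^ 2
          else 0)"
proof -
  have X0: "(fls_X :: 'a fls) \<noteq> 0" by simp
  have main: "Ssum (fls_X :: 'a fls) n s = Rr fls_X n s"
    by (rule main_gen[OF X_prop X0 assms(1)])
  have L: "fps_to_fls (\<Sum>k = 0..n. qbin q (n + k) (2 * k) * qbin q (2 * k) k * qbin q (2 * k) (k + s)
            * ((-1) ^ k * q ^ ((n - k) choose 2)) / (qpoch (- q) q k) ^ 2) = Ssum fls_X n s"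
    unfolding phi_sum Ssum_def tm_def q_def
    by (intro sum.cong refl)
       (simp add: phi_div qpoch_nth0 phi_qpoch phi_qbin fps_to_fls_power fls_times_fps_to_fls phi_simps_aux)
  have R: "fps_to_fls (if even (n - s)
          then (-1) ^ s * q ^ ((n ^ 2 - s ^ 2) div 2) * (qbin (q ^ 2) n ((n - s) div 2)) ^ 2
               * (qpoch q q (n - s) * qpoch q q (n + s)) / (qpoch (q ^ 2) (q ^ 2) n) ^ 2
          else 0) = Rr fls_X n s"
    unfolding Rr_def q_def
    by (simp add: phi_div qpoch_nth0 phi_qpoch phi_qbin fps_to_fls_power fls_times_fps_to_fls phi_simps_aux)
  show ?thesis
    using L R main by (simp only: fps_to_fls_eq_iff flip: L R)
qed

end
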